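(* Let $A$ be a T-brace. (i) If $A$ is $\star$-hypercentral, then the additive group $A\star A$ is periodic. (ii) If $\beta$ is an ordinal and $a,b\in\zeta_\beta(\star,A)$, then $a\star b$ has finite order in $(A,+)$.
   Context: A (left) brace is a set $A$ with two operations $+$ and $\cdot$ such that $(A,+)$ is an abelian group, $(A,\cdot)$ is a group, and $a(b+c)=ab+ac-a$ for all $a,b,c\in A$. Put $a\star b=ab-a-b$; $A\star A$ is the subgroup of $(A,+)$ generated by all $x\star y$. A subbrace is a subset which is a subgroup of both $(A,+)$ and $(A,\cdot)$; a subbrace $L$ is an ideal if $a\star z, z\star a\in L$ for all $a\in A$, $z\in L$, and then the quotient brace $A/L$ is defined. $A$ is a T-brace if whenever $I$ is an ideal of $J$ and $J$ is an ideal of $A$, then $I$ is an ideal of $A$. The $\star$-center is $\zeta(\star,A)=\{a: a\star x=x\star a=0\ \forall x\}$; the upper $\star$-central series is $\zeta_0(\star,A)=0$, $\zeta_{\alpha+1}(\star,A)/\zeta_\alpha(\star,A)=\zeta(\star,A/\zeta_\alpha(\star,A))$, unions at limit ordinals, each term an ideal; its last term is $\zeta_\infty(\star,A)$, and $A$ is $\star$-hypercentral if $A=\zeta_\infty(\star,A)$. *)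

theory Defs
  imports "HOL-Algebra.Algebra"
begin

text \<open>A (left) brace is modelled as a ring-record A: (carrier A, \<oplus>, \<zero>) is the additive
abelian group and (carrier A, \<otimes>, \<one>) the multiplicative group.\<close>

definition brace :: "('a, 'b) ring_scheme \<Rightarrow> bool" where
  "brace A \<longleftrightarrow> abelian_group A \<and> group A \<and>
     (\<forall>a\<in>carrier A. \<forall>b\<in>carrier A. \<forall>c\<in>carrier A.
        a \<otimes>\<^bsub>A\<^esub> (b \<oplus>\<^bsub>A\<^esub> c) = (a \<otimes>\<^bsub>A\<^esub> b \<oplus>\<^bsub>A\<^esub> a \<otimes>\<^bsub>A\<^esub> c) \<ominus>\<^bsub>A\<^esub> a)"

definition bstar :: "('a, 'b) ring_scheme \<Rightarrow> 'a \<Rightarrow> 'a \<Rightarrow> 'a" where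
  "bstar A a b = (a \<otimes>\<^bsub>A\<^esub> b \<ominus>\<^bsub>A\<^esub> a) \<ominus>\<^bsub>A\<^esub> b"

definition star_square :: "('a, 'b) ring_scheme \<Rightarrow> 'a set" where
  "star_square A = generate (add_monoid A) {bstar A x y | x y. x \<in> carrier A \<and> y \<in> carrier A}"

definition subbrace :: "('a, 'b) ring_scheme \<Rightarrow> 'a set \<Rightarrow> bool" where
  "subbrace A L \<longleftrightarrow> subgroup L (add_monoid A) \<and> subgroup L A"

definition ideal_in :: "('a, 'b) ring_scheme \<Rightarrow> 'a set \<Rightarrow> 'a set \<Rightarrow> bool" where
  "ideal_in A J I \<longleftrightarrow> subbrace A J \<and> subbrace A I \<and> I \<subseteq> J \<and>
     (\<forall>a\<in>J. \<forall>z\<in>I. bstar A a z \<in> I \<and> bstar A z a \<in> I)"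

definition T_brace :: "('a, 'b) ring_scheme \<Rightarrow> bool" where
  "T_brace A \<longleftrightarrow> brace A \<and>
     (\<forall>I J. ideal_in A J I \<and> ideal_in A (carrier A) J \<longrightarrow> ideal_in A (carrier A) I)"

text \<open>For an ideal L, the preimage in A of the \<star>-center of A/L.\<close>
definition star_center_over :: "('a, 'b) ring_scheme \<Rightarrow> 'a set \<Rightarrow> 'a set" where
  "star_center_over A L =
     {a \<in> carrier A. \<forall>x\<in>carrier A. bstar A a x \<in> L \<and> bstar A x a \<in> L}"

text \<open>The terms \<zeta>_\<beta>(\<star>,A) of the upper \<star>-central series, \<beta> ranging over all ordinals:
  \<zeta>_0 = 0, \<zeta>_(\<alpha>+1) = star_center_over A \<zeta>_\<alpha>, unions (of chains) at limits.\<close>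
inductive_set upper_star_terms :: "('a, 'b) ring_scheme \<Rightarrow> 'a set set"
  for A :: "('a, 'b) ring_scheme" where
  zero: "{\<zero>\<^bsub>A\<^esub>} \<in> upper_star_terms A"
| succ: "L \<in> upper_star_terms A \<Longrightarrow> star_center_over A L \<in> upper_star_terms A"
| limit: "(\<And>L. L \<in> C \<Longrightarrow> L \<in> upper_star_terms A) \<Longrightarrow> C \<noteq> {} \<Longrightarrow> Complete_Partial_Order.chain (\<subseteq>) C
          \<Longrightarrow> \<Union>C \<in> upper_star_terms A"

definition star_hypercentral :: "('a, 'b) ring_scheme \<Rightarrow> bool" where
  "star_hypercentral A \<longleftrightarrow> carrier A \<in> upper_star_terms A"

definition finite_add_order :: "('a, 'b) ring_scheme \<Rightarrow> 'a \<Rightarrow> bool" where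
  "finite_add_order A g \<longleftrightarrow> (\<exists>n::nat. n > 0 \<and> [n] \<cdot>\<^bsub>A\<^esub> g = \<zero>\<^bsub>A\<^esub>)"

end

theory Submission
  imports Defs
begin


locale brc = abelian_group A + group A for A (structure) +
  assumes distr: "\<lbrakk>a \<in> carrier A; b \<in> carrier A; c \<in> carrier A\<rbrakk> \<Longrightarrow>
     a \<otimes> (b \<oplus> c) = (a \<otimes> b \<oplus> a \<otimes> c) \<ominus> a"
begin

abbreviation st (infixl "\<star>" 70) where "a \<star> b \<equiv> bstar A a b"

lemmas AG = a_ac minus_eq r_neg r_neg1 r_neg2 l_neg minus_add minus_minus add.inv_one

lemma one_zero: "\<one> = \<zero>"
proof -
  have "\<one> \<otimes> (\<zero> \<oplus> \<zero>) = (\<one> \<otimes> \<zero> \<oplus> \<one> \<otimes> \<zero>) \<ominus> \<one>" by (rule distr) auto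
  then have "\<zero> = \<zero> \<ominus> \<one>" by (simp add: a_minus_def)
  then show ?thesis
    by (metis a_minus_def add.inv_closed add.inv_eq_1_iff add.l_one one_closed)
qed

lemma st_closed[simp, intro]: "a \<in> carrier A \<Longrightarrow> b \<in> carrier A \<Longrightarrow> a \<star> b \<in> carrier A"
  by (simp add: bstar_def)

lemma st_eq: "a \<in> carrier A \<Longrightarrow> b \<in> carrier A \<Longrightarrow> a \<star> b = a \<otimes> b \<oplus> \<ominus> a \<oplus> \<ominus> b"
  by (simp add: bstar_def minus_eq)

lemma mult_eq: "a \<in> carrier A \<Longrightarrow> b \<in> carrier A \<Longrightarrow> a \<otimes> b = a \<oplus> b \<oplus> a \<star> b"
  by (simp add: st_eq AG)

lemma distr': "\<lbrakk>a \<in> carrier A; b \<in> carrier A; c \<in> carrier A\<rbrakk> \<Longrightarrow>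
     a \<otimes> (b \<oplus> c) = a \<otimes> b \<oplus> a \<otimes> c \<oplus> \<ominus> a"
  using distr by (simp add: minus_eq)

lemma st_add_right: "\<lbrakk>a \<in> carrier A; b \<in> carrier A; c \<in> carrier A\<rbrakk> \<Longrightarrow>
     a \<star> (b \<oplus> c) = a \<star> b \<oplus> a \<star> c"
  by (simp add: st_eq distr' AG)

lemma mult_zero_r[simp]: "a \<in> carrier A \<Longrightarrow> a \<otimes> \<zero> = a"
  by (metis one_zero r_one)
lemma mult_zero_l[simp]: "a \<in> carrier A \<Longrightarrow> \<zero> \<otimes> a = a"
  by (metis one_zero l_one)

lemma st_zero_right[simp]: "a \<in> carrier A \<Longrightarrow> a \<star> \<zero> = \<zero>"
  by (simp add: st_eq AG)
lemma st_zero_left[simp]: "a \<in> carrier A \<Longrightarrow> \<zero> \<star> a = \<zero>"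
  by (simp add: st_eq AG)

lemma st_neg_right: "\<lbrakk>a \<in> carrier A; b \<in> carrier A\<rbrakk> \<Longrightarrow> a \<star> (\<ominus> b) = \<ominus> (a \<star> b)"
proof -
  assume h: "a \<in> carrier A" "b \<in> carrier A"
  have "a \<star> (b \<oplus> \<ominus> b) = \<zero>" using h by (simp add: r_neg)
  then have "a \<star> b \<oplus> a \<star> (\<ominus> b) = \<zero>" using h by (simp add: st_add_right)
  then show ?thesis using h
    by (metis add.inv_closed add.inv_comm add.inv_equality st_closed)
qed

lemma cancelK: "\<lbrakk>k \<in> carrier A; x \<in> carrier A; y \<in> carrier A; k \<oplus> x = k \<oplus> y\<rbrakk> \<Longrightarrow> x = y"
  by simp

lemma st_mult_left: "\<lbrakk>a \<in> carrier A; b \<in> carrier A; c \<in> carrier A\<rbrakk> \<Longrightarrow>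
   (a \<otimes> b) \<star> c = a \<star> (b \<star> c) \<oplus> b \<star> c \<oplus> a \<star> c"
proof -
  assume h: "a \<in> carrier A" "b \<in> carrier A" "c \<in> carrier A"
  define t where "t = a \<otimes> b"
  have tc: "t \<in> carrier A" using h by (simp add: t_def)
  have te: "t = a \<oplus> b \<oplus> a \<star> b" using h by (simp add: t_def mult_eq)
  have e1: "t \<otimes> c = a \<oplus> b \<oplus> a \<star> b \<oplus> c \<oplus> t \<star> c"
    using mult_eq[OF tc h(3)] te by simp
  define u where "u = b \<otimes> c"
  have uc: "u \<in> carrier A" using h by (simp add: u_def)
  have ue: "u = b \<oplus> c \<oplus> b \<star> c" using h by (simp add: u_def mult_eq)
  have au: "a \<star> u = a \<star> b \<oplus> a \<star> c \<oplus> a \<star> (b \<star> c)" using h unfolding ue by (simp add: st_add_right)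
  have e2: "a \<otimes> u = a \<oplus> (b \<oplus> c \<oplus> b \<star> c) \<oplus> (a \<star> b \<oplus> a \<star> c \<oplus> a \<star> (b \<star> c))"
    using mult_eq[OF h(1) uc] au ue by simp
  have as: "t \<otimes> c = a \<otimes> u" using h by (simp add: t_def u_def m_assoc)
  have X: "(a \<oplus> b \<oplus> c \<oplus> a \<star> b) \<oplus> t \<star> c = (a \<oplus> b \<oplus> c \<oplus> a \<star> b) \<oplus> (a \<star> (b \<star> c) \<oplus> b \<star> c \<oplus> a \<star> c)"
  proof -
    have q: "a \<oplus> b \<oplus> a \<star> b \<oplus> c \<oplus> t \<star> c = a \<oplus> (b \<oplus> c \<oplus> b \<star> c) \<oplus> (a \<star> b \<oplus> a \<star> c \<oplus> a \<star> (b \<star> c))"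
      using e1 e2 as by simp
    have "(a \<oplus> b \<oplus> c \<oplus> a \<star> b) \<oplus> t \<star> c = a \<oplus> b \<oplus> a \<star> b \<oplus> c \<oplus> t \<star> c"
      using h tc by (simp add: a_ac)
    also note q
    also have "a \<oplus> (b \<oplus> c \<oplus> b \<star> c) \<oplus> (a \<star> b \<oplus> a \<star> c \<oplus> a \<star> (b \<star> c)) = (a \<oplus> b \<oplus> c \<oplus> a \<star> b) \<oplus> (a \<star> (b \<star> c) \<oplus> b \<star> c \<oplus> a \<star> c)"
      using h by (simp add: a_ac)
    finally show ?thesis .
  qed
  have "t \<star> c = a \<star> (b \<star> c) \<oplus> b \<star> c \<oplus> a \<star> c"
    by (rule cancelK[OF _ _ _ X]) (use h tc in auto)
  then show ?thesis by (simp add: t_def)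
qed


lemma asubI:
  assumes "S \<subseteq> carrier A" "\<zero> \<in> S" "\<And>a b. a \<in> S \<Longrightarrow> b \<in> S \<Longrightarrow> a \<oplus> b \<in> S"
    "\<And>a. a \<in> S \<Longrightarrow> \<ominus> a \<in> S"
  shows "subgroup S (add_monoid A)"
  using assms unfolding subgroup_def by (auto simp: a_inv_def)

context fixes S assumes aS: "subgroup S (add_monoid A)"
begin
lemma asub_sub: "S \<subseteq> carrier A" using subgroup.subset[OF aS] by simp
lemma asub_zero: "\<zero> \<in> S" using subgroup.one_closed[OF aS] by simp
lemma asub_add: "a \<in> S \<Longrightarrow> b \<in> S \<Longrightarrow> a \<oplus> b \<in> S" using subgroup.m_closed[OF aS] by simp
lemma asub_neg: "a \<in> S \<Longrightarrow> \<ominus> a \<in> S" using subgroup.m_inv_closed[OF aS] by (simp add: a_inv_def)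
lemma asub_minus: "a \<in> S \<Longrightarrow> b \<in> S \<Longrightarrow> a \<ominus> b \<in> S" by (simp add: minus_eq asub_add asub_neg)
lemma asub_pow: "a \<in> S \<Longrightarrow> [(k::int)] \<cdot> a \<in> S" using add.subgroup_int_pow_closed[OF aS] by simp
lemma asub_carr: "a \<in> S \<Longrightarrow> a \<in> carrier A" using asub_sub by auto

lemma md_trans: "a \<in> carrier A \<Longrightarrow> b \<in> carrier A \<Longrightarrow> c \<in> carrier A \<Longrightarrow> a \<ominus> b \<in> S \<Longrightarrow> b \<ominus> c \<in> S \<Longrightarrow> a \<ominus> c \<in> S"
proof -
  assume h: "a \<in> carrier A" "b \<in> carrier A" "c \<in> carrier A" "a \<ominus> b \<in> S" "b \<ominus> c \<in> S"
  have "a \<ominus> c = (a \<ominus> b) \<oplus> (b \<ominus> c)" using h by (simp add: minus_eq a_assoc r_neg1)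
  then show ?thesis using h asub_add by simp
qed
lemma md_sym: "a \<in> carrier A \<Longrightarrow> b \<in> carrier A \<Longrightarrow> a \<ominus> b \<in> S \<Longrightarrow> b \<ominus> a \<in> S"
proof -
  assume h: "a \<in> carrier A" "b \<in> carrier A" "a \<ominus> b \<in> S"
  have "b \<ominus> a = \<ominus> (a \<ominus> b)" using h by (simp add: minus_eq minus_add a_ac)
  then show ?thesis using h asub_neg by simp
qed
lemma md_refl: "a \<in> carrier A \<Longrightarrow> a \<ominus> a \<in> S" by (simp add: minus_eq r_neg asub_zero)
lemma md_add: "a \<in> carrier A \<Longrightarrow> b \<in> carrier A \<Longrightarrow> c \<in> carrier A \<Longrightarrow> d \<in> carrier A \<Longrightarrow>
   a \<ominus> b \<in> S \<Longrightarrow> c \<ominus> d \<in> S \<Longrightarrow> (a \<oplus> c) \<ominus> (b \<oplus> d) \<in> S"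
proof -
  assume h: "a \<in> carrier A" "b \<in> carrier A" "c \<in> carrier A" "d \<in> carrier A" "a \<ominus> b \<in> S" "c \<ominus> d \<in> S"
  have "(a \<oplus> c) \<ominus> (b \<oplus> d) = (a \<ominus> b) \<oplus> (c \<ominus> d)" using h by (simp add: minus_eq minus_add a_ac)
  then show ?thesis using h asub_add by simp
qed
lemma md_neg: "a \<in> carrier A \<Longrightarrow> b \<in> carrier A \<Longrightarrow> a \<ominus> b \<in> S \<Longrightarrow> (\<ominus> a) \<ominus> (\<ominus> b) \<in> S"
proof -
  assume h: "a \<in> carrier A" "b \<in> carrier A" "a \<ominus> b \<in> S"
  have "(\<ominus> a) \<ominus> (\<ominus> b) = \<ominus> (a \<ominus> b)" using h by (simp add: minus_eq minus_add a_ac)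
  then show ?thesis using h asub_neg by simp
qed
lemma md_pow: "a \<in> carrier A \<Longrightarrow> b \<in> carrier A \<Longrightarrow> a \<ominus> b \<in> S \<Longrightarrow> [(k::int)] \<cdot> a \<ominus> [k] \<cdot> b \<in> S"
proof -
  assume h: "a \<in> carrier A" "b \<in> carrier A" "a \<ominus> b \<in> S"
  have "[k] \<cdot> a \<ominus> [k] \<cdot> b = [k] \<cdot> (a \<ominus> b)" using h
    by (simp add: minus_eq add.int_pow_distrib add.int_pow_inv)
  then show ?thesis using h asub_pow by simp
qed
lemma md_mem: "a \<in> carrier A \<Longrightarrow> b \<in> carrier A \<Longrightarrow> a \<ominus> b \<in> S \<Longrightarrow> b \<in> S \<Longrightarrow> a \<in> S"
proof -
  assume h: "a \<in> carrier A" "b \<in> carrier A" "a \<ominus> b \<in> S" "b \<in> S"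
  have "a = (a \<ominus> b) \<oplus> b" using h by (simp add: minus_eq a_assoc l_neg)
  then show ?thesis using h asub_add by metis
qed
lemma md_memD: "a \<in> carrier A \<Longrightarrow> b \<in> carrier A \<Longrightarrow> a \<in> S \<Longrightarrow> b \<in> S \<Longrightarrow> a \<ominus> b \<in> S"
  by (rule asub_minus)
end

lemma ideal_inI:
  assumes aS: "subgroup S (add_monoid A)" and J: "subbrace A J" and SJ: "S \<subseteq> J"
    and cl: "\<And>s y. s \<in> S \<Longrightarrow> y \<in> J \<Longrightarrow> y \<star> s \<in> S \<and> s \<star> y \<in> S"
  shows "ideal_in A J S"
proof -
  have Jm: "subgroup J A" using J by (simp add: subbrace_def)
  have Jc: "J \<subseteq> carrier A" using subgroup.subset[OF Jm] .
  have "subgroup S A"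
  proof (rule subgroupI)
    show "S \<subseteq> carrier A" by (rule asub_sub[OF aS])
    show "S \<noteq> {}" using asub_zero[OF aS] by auto
  next
    fix a assume a: "a \<in> S"
    have ac: "a \<in> carrier A" using a asub_carr[OF aS] by auto
    have bJ: "inv a \<in> J" using subgroup.m_inv_closed[OF Jm] a SJ by auto
    have bc: "inv a \<in> carrier A" using ac by simp
    have w: "a \<star> inv a \<in> S" using cl[OF a bJ] by simp
    have m0: "a \<otimes> inv a = \<zero>" using r_inv[OF ac] one_zero by simp
    have "a \<oplus> inv a \<oplus> a \<star> inv a = \<zero>" using mult_eq[OF ac bc] m0 by simp
    moreover have "a \<oplus> inv a \<oplus> a \<star> inv a = inv a \<oplus> (a \<oplus> a \<star> inv a)" using ac bc by (simp add: a_ac)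
    ultimately have e: "inv a \<oplus> (a \<oplus> a \<star> inv a) = \<zero>" by simp
    have "\<ominus> (a \<oplus> a \<star> inv a) = inv a" by (rule add.inv_equality[OF e]) (use ac bc in auto)
    moreover have "\<ominus> (a \<oplus> a \<star> inv a) \<in> S" using a w aS asub_add asub_neg by blast
    ultimately show "inv a \<in> S" by simp
  next
    fix a b assume a: "a \<in> S" and b: "b \<in> S"
    have ac: "a \<in> carrier A" "b \<in> carrier A" using a b asub_carr[OF aS] by auto
    have "a \<star> b \<in> S" using cl[OF b] a SJ by auto
    then show "a \<otimes> b \<in> S" using mult_eq[OF ac] a b asub_add[OF aS] by simp
  qed
  then show ?thesis using assms unfolding ideal_in_def subbrace_def by auto
qed

lemma subbrace_carrier: "subbrace A (carrier A)"
  unfolding subbrace_def using add.subgroup_self subgroup_self by simp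

context fixes L assumes iL: "ideal_in A (carrier A) L"
begin
lemma idl_asub: "subgroup L (add_monoid A)" using iL by (simp add: ideal_in_def subbrace_def)
lemma idl_carr: "a \<in> L \<Longrightarrow> a \<in> carrier A" using asub_carr[OF idl_asub] .
lemma idl_l: "x \<in> carrier A \<Longrightarrow> z \<in> L \<Longrightarrow> x \<star> z \<in> L" using iL by (simp add: ideal_in_def)
lemma idl_r: "x \<in> carrier A \<Longrightarrow> z \<in> L \<Longrightarrow> z \<star> x \<in> L" using iL by (simp add: ideal_in_def)
end

end



lemma add_pow_int_nat: "add_pow G (int n) x = add_pow G n x"
  by (simp add: add_pow_def int_pow_int)

context brc begin

lemma st_pow_right_nat: "x \<in> carrier A \<Longrightarrow> a \<in> carrier A \<Longrightarrow> x \<star> ([(n::nat)] \<cdot> a) = [n] \<cdot> (x \<star> a)"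
  by (induction n) (simp_all add: st_add_right)

lemma st_pow_right: "x \<in> carrier A \<Longrightarrow> a \<in> carrier A \<Longrightarrow> x \<star> ([(k::int)] \<cdot> a) = [k] \<cdot> (x \<star> a)"
proof (cases "k \<ge> 0")
  case True
  assume h: "x \<in> carrier A" "a \<in> carrier A"
  obtain n where k: "k = int n" using True by (metis nonneg_eq_int)
  show ?thesis using h unfolding k add_pow_int_nat by (rule st_pow_right_nat)
next
  case False
  assume h: "x \<in> carrier A" "a \<in> carrier A"
  obtain n where k: "k = - int n" using False by (metis neg_0_le_iff_le nonneg_eq_int verit_minus_simplify(4) linear)
  show ?thesis using h unfolding k
    by (simp add: add.int_pow_neg add_pow_int_nat st_neg_right st_pow_right_nat)
qed

lemma tors_def': "finite_add_order A g \<longleftrightarrow> (\<exists>n::nat. n > 0 \<and> [n] \<cdot> g = \<zero>)"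
  by (simp add: finite_add_order_def)

lemma tors_zero: "finite_add_order A \<zero>"
  unfolding tors_def' by (rule exI[of _ 1]) simp

lemma tors_add: assumes "a \<in> carrier A" "b \<in> carrier A" "finite_add_order A a" "finite_add_order A b"
  shows "finite_add_order A (a \<oplus> b)"
proof -
  obtain n :: nat where n: "n > 0" "[n] \<cdot> a = \<zero>" using assms(3) tors_def' by auto
  obtain m :: nat where m: "m > 0" "[m] \<cdot> b = \<zero>" using assms(4) tors_def' by auto
  have "[(n*m)] \<cdot> (a \<oplus> b) = [(n*m)] \<cdot> a \<oplus> [(n*m)] \<cdot> b" using assms by (simp add: add.nat_pow_distrib)
  also have "[(n*m)] \<cdot> a = [m] \<cdot> ([n] \<cdot> a)" using assms by (simp add: add.nat_pow_pow)
  also have "[(n*m)] \<cdot> b = [n] \<cdot> ([m] \<cdot> b)" using assms by (simp add: add.nat_pow_pow mult.commute)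
  finally have "[(n*m)] \<cdot> (a \<oplus> b) = \<zero>" using n m by simp
  then show ?thesis unfolding tors_def' using n m by (intro exI[of _ "n*m"]) simp
qed

lemma tors_neg: assumes "a \<in> carrier A" "finite_add_order A a"
  shows "finite_add_order A (\<ominus> a)"
proof -
  obtain n :: nat where n: "n > 0" "[n] \<cdot> a = \<zero>" using assms(2) tors_def' by auto
  have "[n] \<cdot> (\<ominus> a) = \<ominus> ([n] \<cdot> a)" using assms by (simp add: add.nat_pow_inv)
  then show ?thesis unfolding tors_def' using n by (intro exI[of _ n]) simp
qed

lemma tors_minus: "a \<in> carrier A \<Longrightarrow> b \<in> carrier A \<Longrightarrow> finite_add_order A a \<Longrightarrow> finite_add_order A b \<Longrightarrow> finite_add_order A (a \<ominus> b)"
  by (simp add: minus_eq tors_add tors_neg)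

lemma tors_st: assumes "x \<in> carrier A" "t \<in> carrier A" "finite_add_order A t"
  shows "finite_add_order A (x \<star> t)"
proof -
  obtain n :: nat where n: "n > 0" "[n] \<cdot> t = \<zero>" using assms(3) tors_def' by auto
  have "[n] \<cdot> (x \<star> t) = x \<star> ([n] \<cdot> t)" using assms by (simp add: st_pow_right_nat)
  then show ?thesis unfolding tors_def' using n assms by (intro exI[of _ n]) simp
qed

lemma tors_intpow: assumes "a \<in> carrier A" "finite_add_order A a"
  shows "finite_add_order A ([(k::int)] \<cdot> a)"
proof -
  obtain n :: nat where n: "n > 0" "[n] \<cdot> a = \<zero>" using assms(2) tors_def' by auto
  have "[n] \<cdot> ([k] \<cdot> a) = [(int n)] \<cdot> ([k] \<cdot> a)" by (simp add: add_pow_int_nat)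
  also have "... = [(k * int n)] \<cdot> a" using assms by (simp add: add.int_pow_pow)
  also have "... = [(int n * k)] \<cdot> a" by (simp add: mult.commute)
  also have "... = [k] \<cdot> ([(int n)] \<cdot> a)" using assms by (simp add: add.int_pow_pow)
  also have "... = \<zero>" using n by (simp add: add_pow_int_nat)
  finally show ?thesis unfolding tors_def' using n by (intro exI[of _ n]) simp
qed

lemma tors_intpow_rev: assumes "a \<in> carrier A" "(k::int) \<noteq> 0" "finite_add_order A ([k] \<cdot> a)"
  shows "finite_add_order A a"
proof -
  obtain n :: nat where n: "n > 0" "[n] \<cdot> ([k] \<cdot> a) = \<zero>" using assms(3) tors_def' by auto
  define j where "j = k * int n"
  have j0: "j \<noteq> 0" using n assms(2) by (simp add: j_def)
  have "[j] \<cdot> a = [(int n)] \<cdot> ([k] \<cdot> a)" using assms by (simp add: add.int_pow_pow j_def)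
  then have ja: "[j] \<cdot> a = \<zero>" using n by (simp add: add_pow_int_nat)
  have "[(- j)] \<cdot> a = \<zero>" using ja assms by (simp add: add.int_pow_neg)
  then have "[\<bar>j\<bar>] \<cdot> a = \<zero>" using ja by (simp add: abs_if)
  moreover have "\<bar>j\<bar> = int (nat \<bar>j\<bar>)" by simp
  ultimately have "[(nat \<bar>j\<bar>)] \<cdot> a = \<zero>" by (metis add_pow_int_nat)
  then show ?thesis unfolding tors_def' using j0 by (intro exI[of _ "nat \<bar>j\<bar>"]) simp
qed

end



context brc begin

context fixes L M
  assumes iL: "ideal_in A (carrier A) L" and iM: "ideal_in A (carrier A) M"
    and LM: "\<And>l x. l \<in> L \<Longrightarrow> x \<in> carrier A \<Longrightarrow> l \<star> x \<in> M \<and> x \<star> l \<in> M"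
begin

lemma LL1: assumes v: "v \<in> carrier A" and l: "l \<in> L" and x: "x \<in> carrier A"
  shows "(v \<oplus> l) \<star> x \<ominus> v \<star> x \<in> M"
proof -
  have lc: "l \<in> carrier A" using l idl_carr[OF iL] by auto
  have ic: "inv v \<in> carrier A" using v by simp
  define l' where "l' = (inv v) \<star> l \<oplus> l"
  have l'L: "l' \<in> L" unfolding l'_def using idl_l[OF iL ic l] l asub_add[OF idl_asub[OF iL]] by auto
  have l'c: "l' \<in> carrier A" using l'L idl_carr[OF iL] by auto
  have z: "v \<star> ((inv v) \<star> l) \<oplus> (inv v) \<star> l \<oplus> v \<star> l = \<zero>"
  proof -
    have "(v \<otimes> inv v) \<star> l = \<zero>" using v lc r_inv[OF v] one_zero by simp
    then show ?thesis using st_mult_left[OF v ic lc] by simp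
  qed
  have "v \<otimes> l' = v \<oplus> l' \<oplus> v \<star> l'" by (rule mult_eq[OF v l'c])
  also have "... = v \<oplus> ((inv v) \<star> l \<oplus> l) \<oplus> (v \<star> ((inv v) \<star> l) \<oplus> v \<star> l)"
    unfolding l'_def using v ic lc by (simp add: st_add_right)
  also have "... = v \<oplus> l \<oplus> (v \<star> ((inv v) \<star> l) \<oplus> (inv v) \<star> l \<oplus> v \<star> l)"
    using v ic lc by (simp add: a_ac)
  also have "... = v \<oplus> l" using z v lc by simp
  finally have vl: "v \<otimes> l' = v \<oplus> l" .
  have "(v \<oplus> l) \<star> x = v \<star> (l' \<star> x) \<oplus> l' \<star> x \<oplus> v \<star> x"
    unfolding vl[symmetric] by (rule st_mult_left[OF v l'c x])
  then have "(v \<oplus> l) \<star> x \<ominus> v \<star> x = v \<star> (l' \<star> x) \<oplus> l' \<star> x"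
    using v l'c x by (simp add: minus_eq a_assoc r_neg)
  moreover have "l' \<star> x \<in> M" using LM[OF l'L x] by simp
  moreover then have "v \<star> (l' \<star> x) \<in> M" using idl_l[OF iM v] by simp
  ultimately show ?thesis using asub_add[OF idl_asub[OF iM]] by simp
qed

lemma LL2: assumes v: "v \<in> carrier A" and w: "w \<in> carrier A" and vw: "v \<star> w \<in> L"
  and wx: "w \<star> x \<in> L" and x: "x \<in> carrier A"
  shows "(v \<oplus> w) \<star> x \<ominus> (v \<star> x \<oplus> w \<star> x) \<in> M"
proof -
  have vwc: "v \<star> w \<in> carrier A" using v w by simp
  have nL: "\<ominus> (v \<star> w) \<in> L" using asub_neg[OF idl_asub[OF iL] vw] .
  have e: "(v \<otimes> w) \<oplus> \<ominus> (v \<star> w) = v \<oplus> w"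
    using mult_eq[OF v w] v w by (simp add: a_assoc r_neg)
  have m1: "(v \<oplus> w) \<star> x \<ominus> (v \<otimes> w) \<star> x \<in> M"
    using LL1[OF m_closed[OF v w] nL x] unfolding e .
  have e2: "(v \<otimes> w) \<star> x = v \<star> (w \<star> x) \<oplus> (v \<star> x \<oplus> w \<star> x)"
    using st_mult_left[OF v w x] v w x by (simp add: a_ac)
  have "(v \<otimes> w) \<star> x \<ominus> (v \<star> x \<oplus> w \<star> x) = v \<star> (w \<star> x)"
    unfolding e2 using v w x by (simp add: minus_eq a_assoc r_neg)
  moreover have "v \<star> (w \<star> x) \<in> M" using LM[OF wx v] by simp
  ultimately have m2: "(v \<otimes> w) \<star> x \<ominus> (v \<star> x \<oplus> w \<star> x) \<in> M" by simp
  show ?thesis using md_trans[OF idl_asub[OF iM] _ _ _ m1 m2] v w x by simp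
qed

lemma LLneg: assumes p: "p \<in> carrier A" and pp: "(\<ominus> p) \<star> p \<in> L" and px: "p \<star> x \<in> L"
  and x: "x \<in> carrier A"
  shows "(\<ominus> p) \<star> x \<ominus> \<ominus> (p \<star> x) \<in> M"
proof -
  have "((\<ominus> p) \<oplus> p) \<star> x \<ominus> ((\<ominus> p) \<star> x \<oplus> p \<star> x) \<in> M"
    using LL2[OF _ p pp px x] p by simp
  then have "\<ominus> ((\<ominus> p) \<star> x \<oplus> p \<star> x) \<in> M" using p x by (simp add: l_neg minus_eq)
  then have "\<ominus> (\<ominus> ((\<ominus> p) \<star> x \<oplus> p \<star> x)) \<in> M" using asub_neg[OF idl_asub[OF iM]] by blast
  then show ?thesis using p x by (simp add: minus_eq)
qed


lemma LLpow_nat: assumes w: "w \<in> carrier A" and hw: "\<And>y. y \<in> carrier A \<Longrightarrow> y \<star> w \<in> L \<and> w \<star> y \<in> L"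
  and x: "x \<in> carrier A"
  shows "([(n::nat)] \<cdot> w) \<star> x \<ominus> [n] \<cdot> (w \<star> x) \<in> M"
proof (induction n)
  case 0
  then show ?case using x asub_neg[OF idl_asub[OF iM] asub_zero[OF idl_asub[OF iM]]] by (simp add: minus_eq)
next
  case (Suc n)
  have pc: "[n] \<cdot> w \<in> carrier A" using w by simp
  have a1: "([n] \<cdot> w \<oplus> w) \<star> x \<ominus> (([n] \<cdot> w) \<star> x \<oplus> w \<star> x) \<in> M"
    using LL2[OF pc w _ _ x] hw[OF pc] hw[OF x] by simp
  have a2: "(([n] \<cdot> w) \<star> x \<oplus> w \<star> x) \<ominus> ([n] \<cdot> (w \<star> x) \<oplus> w \<star> x) \<in> M"
    using md_add[OF idl_asub[OF iM] _ _ _ _ Suc.IH md_refl[OF idl_asub[OF iM]]] w x by simp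
  show ?case using md_trans[OF idl_asub[OF iM] _ _ _ a1 a2] w x by simp
qed

end

lemma asub_pow_nat: "subgroup S (add_monoid A) \<Longrightarrow> a \<in> S \<Longrightarrow> [(n::nat)] \<cdot> a \<in> S"
  using asub_pow[of S a "int n"] by (simp add: add_pow_int_nat)

lemma LLpow: assumes iL: "ideal_in A (carrier A) L" and iM: "ideal_in A (carrier A) M"
    and LM: "\<And>l x. l \<in> L \<Longrightarrow> x \<in> carrier A \<Longrightarrow> l \<star> x \<in> M \<and> x \<star> l \<in> M"
    and hML: "M \<subseteq> L"
    and w: "w \<in> carrier A" and hw: "\<And>y. y \<in> carrier A \<Longrightarrow> y \<star> w \<in> L \<and> w \<star> y \<in> L"
    and x: "x \<in> carrier A"
  shows "([(k::int)] \<cdot> w) \<star> x \<ominus> [k] \<cdot> (w \<star> x) \<in> M"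
proof (cases "k \<ge> 0")
  case True
  obtain n where k: "k = int n" using True by (metis nonneg_eq_int)
  show ?thesis unfolding k add_pow_int_nat by (rule LLpow_nat[OF iL iM LM w hw x])
next
  case False
  obtain n where k: "k = - int n" using False by (metis neg_0_le_iff_le nonneg_eq_int verit_minus_simplify(4) linear)
  define p where "p = [n] \<cdot> w"
  have pc: "p \<in> carrier A" using w by (simp add: p_def)
  have aL: "subgroup L (add_monoid A)" using idl_asub[OF iL] .
  have aM: "subgroup M (add_monoid A)" using idl_asub[OF iM] .
  have pp: "(\<ominus> p) \<star> p \<in> L" unfolding p_def using st_pow_right_nat[of "\<ominus> p" w n] pc w hw[of "\<ominus> p"]
      asub_pow_nat[OF aL] by (simp add: p_def)
  have q: "p \<star> x \<ominus> [n] \<cdot> (w \<star> x) \<in> M" unfolding p_def by (rule LLpow_nat[OF iL iM LM w hw x])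
  have q1: "p \<star> x \<ominus> [n] \<cdot> (w \<star> x) \<in> L" using q hML by auto
  have q2: "[n] \<cdot> (w \<star> x) \<in> L" by (rule asub_pow_nat[OF aL]) (use hw[OF x] in simp)
  have px: "p \<star> x \<in> L" by (rule md_mem[OF aL _ _ q1 q2]) (use pc x w in auto)
  have r1: "(\<ominus> p) \<star> x \<ominus> \<ominus> (p \<star> x) \<in> M" by (rule LLneg[OF iL iM LM pc pp px x])
  have r2: "\<ominus> (p \<star> x) \<ominus> \<ominus> ([n] \<cdot> (w \<star> x)) \<in> M" using md_neg[OF aM _ _ q] pc x w by simp
  have "(\<ominus> p) \<star> x \<ominus> \<ominus> ([n] \<cdot> (w \<star> x)) \<in> M" using md_trans[OF aM _ _ _ r1 r2] pc x w by simp
  moreover have "[k] \<cdot> w = \<ominus> p" unfolding k p_def using w by (simp add: add.int_pow_neg add_pow_int_nat)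
  moreover have "[k] \<cdot> (w \<star> x) = \<ominus> ([n] \<cdot> (w \<star> x))" unfolding k using w x by (simp add: add.int_pow_neg add_pow_int_nat)
  ultimately show ?thesis by simp
qed

lemma center_ideal: assumes iL: "ideal_in A (carrier A) L"
  shows "ideal_in A (carrier A) (star_center_over A L)"
proof -
  let ?Z = "star_center_over A L"
  have aL: "subgroup L (add_monoid A)" using idl_asub[OF iL] .
  have LL: "\<And>l x. l \<in> L \<Longrightarrow> x \<in> carrier A \<Longrightarrow> l \<star> x \<in> L \<and> x \<star> l \<in> L"
    using idl_l[OF iL] idl_r[OF iL] by auto
  have Zd: "\<And>z. z \<in> ?Z \<longleftrightarrow> z \<in> carrier A \<and> (\<forall>x\<in>carrier A. z \<star> x \<in> L \<and> x \<star> z \<in> L)"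
    by (simp add: star_center_over_def)
  have LZ: "L \<subseteq> ?Z" using LL idl_carr[OF iL] Zd by auto
  have aZ: "subgroup ?Z (add_monoid A)"
  proof (rule asubI)
    show "?Z \<subseteq> carrier A" using Zd by auto
    show "\<zero> \<in> ?Z" using Zd asub_zero[OF aL] by simp
  next
    fix a b assume a: "a \<in> ?Z" and b: "b \<in> ?Z"
    have ac: "a \<in> carrier A" "b \<in> carrier A" using a b Zd by auto
    have "\<forall>x\<in>carrier A. (a \<oplus> b) \<star> x \<in> L \<and> x \<star> (a \<oplus> b) \<in> L"
    proof
      fix x assume x: "x \<in> carrier A"
      have f1: "(a \<oplus> b) \<star> x \<ominus> (a \<star> x \<oplus> b \<star> x) \<in> L"
        using LL2[OF iL iL LL ac(1) ac(2) _ _ x] a b x ac Zd by auto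
      have f2: "a \<star> x \<oplus> b \<star> x \<in> L" using a b x Zd asub_add[OF aL] by auto
      have "(a \<oplus> b) \<star> x \<in> L" by (rule md_mem[OF aL _ _ f1 f2]) (use ac x in auto)
      moreover have "x \<star> (a \<oplus> b) \<in> L" using a b x Zd asub_add[OF aL] ac by (simp add: st_add_right)
      ultimately show "(a \<oplus> b) \<star> x \<in> L \<and> x \<star> (a \<oplus> b) \<in> L" by simp
    qed
    then show "a \<oplus> b \<in> ?Z" using Zd ac by auto
  next
    fix a assume a: "a \<in> ?Z"
    have ac: "a \<in> carrier A" using a Zd by auto
    have "\<forall>x\<in>carrier A. (\<ominus> a) \<star> x \<in> L \<and> x \<star> (\<ominus> a) \<in> L"
    proof
      fix x assume x: "x \<in> carrier A"
      have f1: "(\<ominus> a) \<star> x \<ominus> \<ominus> (a \<star> x) \<in> L"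
        using LLneg[OF iL iL LL ac _ _ x] a x ac Zd by auto
      have f2: "\<ominus> (a \<star> x) \<in> L" using a x Zd asub_neg[OF aL] by auto
      have "(\<ominus> a) \<star> x \<in> L" by (rule md_mem[OF aL _ _ f1 f2]) (use ac x in auto)
      moreover have "x \<star> (\<ominus> a) \<in> L" using a x Zd asub_neg[OF aL] ac by (simp add: st_neg_right)
      ultimately show "(\<ominus> a) \<star> x \<in> L \<and> x \<star> (\<ominus> a) \<in> L" by simp
    qed
    then show "\<ominus> a \<in> ?Z" using Zd ac by auto
  qed
  show ?thesis
  proof (rule ideal_inI[OF aZ subbrace_carrier])
    show "?Z \<subseteq> carrier A" using Zd by auto
    fix s y assume "s \<in> ?Z" "y \<in> carrier A"
    then show "y \<star> s \<in> ?Z \<and> s \<star> y \<in> ?Z" using Zd LZ by auto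
  qed
qed

lemma zero_ideal: "ideal_in A (carrier A) {\<zero>}"
proof -
  have a: "subgroup {\<zero>} (add_monoid A)" by (rule asubI) auto
  show ?thesis by (rule ideal_inI[OF a subbrace_carrier]) auto
qed

lemma chain_ideal: assumes ne: "C \<noteq> {}" and ch: "Complete_Partial_Order.chain (\<subseteq>) C"
  and id: "\<And>L. L \<in> C \<Longrightarrow> ideal_in A (carrier A) L"
  shows "ideal_in A (carrier A) (\<Union>C)"
proof -
  have a: "subgroup (\<Union>C) (add_monoid A)"
  proof (rule asubI)
    show "\<Union>C \<subseteq> carrier A" using id idl_carr by blast
    obtain L where "L \<in> C" using ne by auto
    then show "\<zero> \<in> \<Union>C" using id asub_zero[OF idl_asub] by blast
  next
    fix a b assume "a \<in> \<Union>C" "b \<in> \<Union>C"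
    then obtain L1 L2 where l: "L1 \<in> C" "L2 \<in> C" "a \<in> L1" "b \<in> L2" by auto
    have "L1 \<subseteq> L2 \<or> L2 \<subseteq> L1" using ch l unfolding chain_def by auto
    then show "a \<oplus> b \<in> \<Union>C"
    proof
      assume "L1 \<subseteq> L2" then show ?thesis using l asub_add[OF idl_asub[OF id]] by blast
    next
      assume "L2 \<subseteq> L1" then show ?thesis using l asub_add[OF idl_asub[OF id]] by blast
    qed
  next
    fix a assume "a \<in> \<Union>C"
    then show "\<ominus> a \<in> \<Union>C" using asub_neg[OF idl_asub[OF id]] by blast
  qed
  show ?thesis
  proof (rule ideal_inI[OF a subbrace_carrier])
    show "\<Union>C \<subseteq> carrier A" using id idl_carr by blast
    fix s y assume "s \<in> \<Union>C" "y \<in> carrier A"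
    then show "y \<star> s \<in> \<Union>C \<and> s \<star> y \<in> \<Union>C" using id idl_l idl_r by blast
  qed
qed

lemma tors_ideal: assumes iL: "ideal_in A (carrier A) L"
  and tL: "\<And>l x. l \<in> L \<Longrightarrow> x \<in> carrier A \<Longrightarrow> finite_add_order A (l \<star> x) \<and> finite_add_order A (x \<star> l)"
  shows "ideal_in A (carrier A) {g \<in> L. finite_add_order A g}"
proof -
  have aL: "subgroup L (add_monoid A)" using idl_asub[OF iL] .
  have a: "subgroup {g \<in> L. finite_add_order A g} (add_monoid A)"
  proof (rule asubI)
    show "{g \<in> L. finite_add_order A g} \<subseteq> carrier A" using idl_carr[OF iL] by auto
    show "\<zero> \<in> {g \<in> L. finite_add_order A g}" using asub_zero[OF aL] tors_zero by simp
  next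
    fix a b assume "a \<in> {g \<in> L. finite_add_order A g}" "b \<in> {g \<in> L. finite_add_order A g}"
    then show "a \<oplus> b \<in> {g \<in> L. finite_add_order A g}"
      using asub_add[OF aL] tors_add idl_carr[OF iL] by auto
  next
    fix a assume "a \<in> {g \<in> L. finite_add_order A g}"
    then show "\<ominus> a \<in> {g \<in> L. finite_add_order A g}"
      using asub_neg[OF aL] tors_neg idl_carr[OF iL] by auto
  qed
  show ?thesis
  proof (rule ideal_inI[OF a subbrace_carrier])
    show "{g \<in> L. finite_add_order A g} \<subseteq> carrier A" using idl_carr[OF iL] by auto
    fix s y assume "s \<in> {g \<in> L. finite_add_order A g}" "y \<in> carrier A"
    then show "y \<star> s \<in> {g \<in> L. finite_add_order A g} \<and> s \<star> y \<in> {g \<in> L. finite_add_order A g}"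
      using tL idl_l[OF iL] idl_r[OF iL] by auto
  qed
qed

end



context brc begin

lemma pow0i[simp]: "[(0::int)] \<cdot> x = \<zero>"
  by (simp add: add_pow_def)

lemma add_minus_cancel: "a \<in> carrier A \<Longrightarrow> b \<in> carrier A \<Longrightarrow> a \<oplus> b \<ominus> a = b"
  by (simp add: minus_eq a_comm[of a b] a_assoc r_neg)

lemma minus_minus_cancel: "a \<in> carrier A \<Longrightarrow> b \<in> carrier A \<Longrightarrow> a \<ominus> (a \<ominus> b) = b"
  by (simp add: minus_eq minus_add r_neg2)

lemma add_minus_cancel2: "a \<in> carrier A \<Longrightarrow> b \<in> carrier A \<Longrightarrow> a \<oplus> (b \<ominus> a) = b"
proof -
  assume h: "a \<in> carrier A" "b \<in> carrier A"
  have "a \<oplus> (b \<oplus> \<ominus> a) = b \<oplus> (a \<oplus> \<ominus> a)" using h by (simp add: a_lcomm[of a b])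
  then show ?thesis using h by (simp add: minus_eq r_neg)
qed

lemma eq_sub: "p \<in> carrier A \<Longrightarrow> q \<in> carrier A \<Longrightarrow> x = p \<oplus> q \<Longrightarrow> p = x \<ominus> q"
  by (simp add: minus_eq a_assoc r_neg)

lemma md_addM: "subgroup S (add_monoid A) \<Longrightarrow> a \<in> carrier A \<Longrightarrow> b \<in> carrier A \<Longrightarrow> z \<in> carrier A \<Longrightarrow>
   a \<ominus> b \<in> S \<Longrightarrow> z \<in> S \<Longrightarrow> (a \<oplus> z) \<ominus> b \<in> S"
proof -
  assume h: "subgroup S (add_monoid A)" "a \<in> carrier A" "b \<in> carrier A" "z \<in> carrier A" "a \<ominus> b \<in> S" "z \<in> S"
  have "(a \<oplus> z) \<ominus> b = (a \<ominus> b) \<oplus> z" using h by (simp add: minus_eq a_ac)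
  then show ?thesis using asub_add[OF h(1) h(5) h(6)] by simp
qed

lemma Zmem: "z \<in> star_center_over A L \<Longrightarrow> y \<in> carrier A \<Longrightarrow> y \<star> z \<in> L \<and> z \<star> y \<in> L"
  by (simp add: star_center_over_def)

lemma Zcarr: "z \<in> star_center_over A L \<Longrightarrow> z \<in> carrier A"
  by (simp add: star_center_over_def)

lemma succ_tors:
  assumes T: "\<forall>I J. ideal_in A J I \<and> ideal_in A (carrier A) J \<longrightarrow> ideal_in A (carrier A) I"
    and iL: "ideal_in A (carrier A) L"
    and tL: "\<And>l x. l \<in> L \<Longrightarrow> x \<in> carrier A \<Longrightarrow> finite_add_order A (l \<star> x) \<and> finite_add_order A (x \<star> l)"
    and uZ: "u \<in> star_center_over A L"
    and x: "x \<in> carrier A"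
  shows "finite_add_order A (u \<star> x) \<and> finite_add_order A (x \<star> u)"
proof -
  define M where "M = {g \<in> L. finite_add_order A g}"
  have iM: "ideal_in A (carrier A) M" unfolding M_def by (rule tors_ideal[OF iL tL])
  have LM: "\<And>l x. l \<in> L \<Longrightarrow> x \<in> carrier A \<Longrightarrow> l \<star> x \<in> M \<and> x \<star> l \<in> M"
    unfolding M_def using tL idl_l[OF iL] idl_r[OF iL] by auto
  have hML: "M \<subseteq> L" unfolding M_def by auto
  have Mt: "\<And>g. g \<in> M \<Longrightarrow> finite_add_order A g" unfolding M_def by auto
  define Z where "Z = star_center_over A L"
  have iZ: "ideal_in A (carrier A) Z" unfolding Z_def by (rule center_ideal[OF iL])
  have aL: "subgroup L (add_monoid A)" by (rule idl_asub[OF iL])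
  have aM: "subgroup M (add_monoid A)" by (rule idl_asub[OF iM])
  have aZ: "subgroup Z (add_monoid A)" by (rule idl_asub[OF iZ])
  have uc: "u \<in> carrier A" using uZ by (rule Zcarr)
  have hu: "\<And>y. y \<in> carrier A \<Longrightarrow> y \<star> u \<in> L \<and> u \<star> y \<in> L" using uZ Zmem by blast
  have LZ: "L \<subseteq> Z" unfolding Z_def star_center_over_def using idl_carr[OF iL] idl_l[OF iL] idl_r[OF iL] by auto
  have Lc: "\<And>l. l \<in> L \<Longrightarrow> l \<in> carrier A" using idl_carr[OF iL] .
  have Mc: "\<And>l. l \<in> M \<Longrightarrow> l \<in> carrier A" using idl_carr[OF iM] .
  have Zc: "\<And>l. l \<in> Z \<Longrightarrow> l \<in> carrier A" using idl_carr[OF iZ] .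
  have uZ': "u \<in> Z" using uZ Z_def by simp
  define c where "c = u \<star> u"
  have cL: "c \<in> L" unfolding c_def using hu[OF uc] by simp
  have cc: "c \<in> carrier A" using cL Lc by simp
  define J where "J = {[(2 * (k::int))] \<cdot> u \<oplus> l | k l. l \<in> L}"
  define I where "I = {[(2 * (k::int))] \<cdot> u \<oplus> ([(4 * (j::int))] \<cdot> c \<oplus> m) | k j m. m \<in> M}"
  have JZ: "J \<subseteq> Z" unfolding J_def using asub_pow[OF aZ uZ'] LZ asub_add[OF aZ] by blast
  have aJ: "subgroup J (add_monoid A)"
  proof (rule asubI)
    show "J \<subseteq> carrier A" using JZ Zc by blast
    have "\<zero> = [(2 * (0::int))] \<cdot> u \<oplus> \<zero>" by simp
    then show "\<zero> \<in> J" unfolding J_def using asub_zero[OF aL] by blast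
  next
    fix a b assume "a \<in> J" "b \<in> J"
    then obtain k l k' l' where a: "a = [(2 * (k::int))] \<cdot> u \<oplus> l" "l \<in> L"
      and b: "b = [(2 * (k'::int))] \<cdot> u \<oplus> l'" "l' \<in> L" unfolding J_def by blast
    have "a \<oplus> b = [(2 * (k + k'))] \<cdot> u \<oplus> (l \<oplus> l')"
      using a b uc Lc by (simp add: distrib_left add.int_pow_mult a_ac)
    then show "a \<oplus> b \<in> J" unfolding J_def using asub_add[OF aL a(2) b(2)] by blast
  next
    fix a assume "a \<in> J"
    then obtain k l where a: "a = [(2 * (k::int))] \<cdot> u \<oplus> l" "l \<in> L" unfolding J_def by blast
    have "\<ominus> a = [(2 * (- k))] \<cdot> u \<oplus> \<ominus> l"
      using a uc Lc by (simp add: add.int_pow_neg minus_add)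
    then show "\<ominus> a \<in> J" unfolding J_def using asub_neg[OF aL a(2)] by blast
  qed
  have LJ: "L \<subseteq> J"
  proof
    fix l assume l: "l \<in> L"
    have "l = [(2 * (0::int))] \<cdot> u \<oplus> l" using l Lc by simp
    then show "l \<in> J" unfolding J_def using l by blast
  qed
  have iJ: "ideal_in A (carrier A) J"
  proof (rule ideal_inI[OF aJ subbrace_carrier])
    show "J \<subseteq> carrier A" using JZ Zc by blast
    fix s y assume "s \<in> J" "y \<in> carrier A"
    then have "y \<star> s \<in> L \<and> s \<star> y \<in> L" using JZ Zmem Z_def by blast
    then show "y \<star> s \<in> J \<and> s \<star> y \<in> J" using LJ by blast
  qed
  have sbJ: "subbrace A J" using iJ by (simp add: ideal_in_def)
  have IJ: "I \<subseteq> J"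
  proof
    fix s assume "s \<in> I"
    then obtain k j m where s: "s = [(2 * (k::int))] \<cdot> u \<oplus> ([(4 * (j::int))] \<cdot> c \<oplus> m)" "m \<in> M"
      unfolding I_def by blast
    have "[(4 * j)] \<cdot> c \<oplus> m \<in> L" using asub_add[OF aL asub_pow[OF aL cL]] s(2) hML by blast
    then show "s \<in> J" unfolding J_def s(1) by blast
  qed
  have aI: "subgroup I (add_monoid A)"
  proof (rule asubI)
    show "I \<subseteq> carrier A" using IJ JZ Zc by blast
    have "\<zero> = [(2 * (0::int))] \<cdot> u \<oplus> ([(4 * (0::int))] \<cdot> c \<oplus> \<zero>)" by simp
    then show "\<zero> \<in> I" unfolding I_def using asub_zero[OF aM] by blast
  next
    fix a b assume "a \<in> I" "b \<in> I"
    then obtain k j m k' j' m' where a: "a = [(2 * (k::int))] \<cdot> u \<oplus> ([(4 * (j::int))] \<cdot> c \<oplus> m)" "m \<in> M"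
      and b: "b = [(2 * (k'::int))] \<cdot> u \<oplus> ([(4 * (j'::int))] \<cdot> c \<oplus> m')" "m' \<in> M" unfolding I_def by blast
    have "a \<oplus> b = [(2 * (k + k'))] \<cdot> u \<oplus> ([(4 * (j + j'))] \<cdot> c \<oplus> (m \<oplus> m'))"
      using a b uc cc Mc by (simp add: distrib_left add.int_pow_mult a_ac)
    then show "a \<oplus> b \<in> I" unfolding I_def using asub_add[OF aM a(2) b(2)] by blast
  next
    fix a assume "a \<in> I"
    then obtain k j m where a: "a = [(2 * (k::int))] \<cdot> u \<oplus> ([(4 * (j::int))] \<cdot> c \<oplus> m)" "m \<in> M"
      unfolding I_def by blast
    have "\<ominus> a = [(2 * (- k))] \<cdot> u \<oplus> ([(4 * (- j))] \<cdot> c \<oplus> \<ominus> m)"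
      using a uc cc Mc by (simp add: add.int_pow_neg minus_add)
    then show "\<ominus> a \<in> I" unfolding I_def using asub_neg[OF aM a(2)] by blast
  qed
  have memI: "\<And>w n. w \<in> carrier A \<Longrightarrow> w \<ominus> [(4 * (n::int))] \<cdot> c \<in> M \<Longrightarrow> w \<in> I"
  proof -
    fix w n assume w: "w \<in> carrier A" and d: "w \<ominus> [(4 * (n::int))] \<cdot> c \<in> M"
    have "w = [(2 * (0::int))] \<cdot> u \<oplus> ([(4 * n)] \<cdot> c \<oplus> (w \<ominus> [(4 * n)] \<cdot> c))"
      using w cc add_minus_cancel2[of "[(4 * n)] \<cdot> c" w] by simp
    then show "w \<in> I" unfolding I_def using d by blast
  qed
  have C1: "\<And>k l. l \<in> L \<Longrightarrow> ([(2 * (k::int))] \<cdot> u \<oplus> l) \<star> u \<ominus> [(2 * k)] \<cdot> c \<in> M"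
  proof -
    fix k l assume l: "l \<in> L"
    have pc: "[(2 * (k::int))] \<cdot> u \<in> carrier A" using uc by simp
    have f1: "([(2 * k)] \<cdot> u \<oplus> l) \<star> u \<ominus> ([(2 * k)] \<cdot> u) \<star> u \<in> M" by (rule LL1[OF iL iM LM pc l uc])
    have f2: "([(2 * k)] \<cdot> u) \<star> u \<ominus> [(2 * k)] \<cdot> (u \<star> u) \<in> M" by (rule LLpow[OF iL iM LM hML uc hu uc])
    show "([(2 * (k::int))] \<cdot> u \<oplus> l) \<star> u \<ominus> [(2 * k)] \<cdot> c \<in> M"
      using md_trans[OF aM _ _ _ f1 f2] pc l Lc uc unfolding c_def by simp
  qed
  have C2: "\<And>k l. l \<in> L \<Longrightarrow> u \<star> ([(2 * (k::int))] \<cdot> u \<oplus> l) \<ominus> [(2 * k)] \<cdot> c \<in> M"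
  proof -
    fix k l assume l: "l \<in> L"
    have pc: "[(2 * (k::int))] \<cdot> u \<in> carrier A" using uc by simp
    have "u \<star> ([(2 * k)] \<cdot> u \<oplus> l) = [(2 * k)] \<cdot> c \<oplus> u \<star> l"
      using pc uc l Lc by (simp add: st_add_right st_pow_right c_def)
    then have "u \<star> ([(2 * k)] \<cdot> u \<oplus> l) \<ominus> [(2 * k)] \<cdot> c = u \<star> l"
      using add_minus_cancel[of "[(2 * k)] \<cdot> c" "u \<star> l"] uc l Lc cc by simp
    then show "u \<star> ([(2 * (k::int))] \<cdot> u \<oplus> l) \<ominus> [(2 * k)] \<cdot> c \<in> M" using LM[OF l uc] by simp
  qed
  have cl: "\<And>s y. s \<in> I \<Longrightarrow> y \<in> J \<Longrightarrow> y \<star> s \<in> I \<and> s \<star> y \<in> I"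
  proof -
    fix s y assume sI: "s \<in> I" and yJ: "y \<in> J"
    obtain m j \<mu> where s: "s = [(2 * (m::int))] \<cdot> u \<oplus> ([(4 * (j::int))] \<cdot> c \<oplus> \<mu>)" and mu: "\<mu> \<in> M"
      using sI unfolding I_def by blast
    obtain k l where y: "y = [(2 * (k::int))] \<cdot> u \<oplus> l" and l: "l \<in> L"
      using yJ unfolding J_def by blast
    define r where "r = [(4 * j)] \<cdot> c \<oplus> \<mu>"
    have rL: "r \<in> L" unfolding r_def using asub_add[OF aL asub_pow[OF aL cL]] mu hML by blast
    have rc: "r \<in> carrier A" using rL Lc by simp
    have yc: "y \<in> carrier A" using yJ JZ Zc by blast
    have pc: "[(2 * m)] \<cdot> u \<in> carrier A" using uc by simp
    have sr: "s = [(2 * m)] \<cdot> u \<oplus> r" using s r_def by simp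
    have sc: "s \<in> carrier A" using sr pc rc by simp
    have pw: "[(2 * m)] \<cdot> ([(2 * k)] \<cdot> c) = [(4 * (k * m))] \<cdot> c"
      using cc by (simp add: add.int_pow_pow mult.assoc mult.left_commute)
    have pwc: "[(4 * (k * m))] \<cdot> c \<in> carrier A" using cc by simp
    have e1: "y \<star> s = [(2 * m)] \<cdot> (y \<star> u) \<oplus> y \<star> r"
      unfolding sr using yc uc rc by (simp add: st_add_right st_pow_right)
    have d1: "y \<star> u \<ominus> [(2 * k)] \<cdot> c \<in> M" using C1[OF l] y by simp
    have d2: "[(2 * m)] \<cdot> (y \<star> u) \<ominus> [(4 * (k * m))] \<cdot> c \<in> M"
      using md_pow[OF aM _ _ d1, of "2 * m"] yc uc cc pw by simp
    have yr: "y \<star> r \<in> M" using LM[OF rL yc] by simp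
    have "y \<star> s \<ominus> [(4 * (k * m))] \<cdot> c \<in> M"
      unfolding e1 by (rule md_addM[OF aM _ _ _ d2 yr]) (use yc uc rc cc in auto)
    then have ys: "y \<star> s \<in> I" using memI yc sc by blast
    have f1: "s \<star> y \<ominus> ([(2 * m)] \<cdot> u) \<star> y \<in> M" unfolding sr by (rule LL1[OF iL iM LM pc rL yc])
    have f2: "([(2 * m)] \<cdot> u) \<star> y \<ominus> [(2 * m)] \<cdot> (u \<star> y) \<in> M" by (rule LLpow[OF iL iM LM hML uc hu yc])
    have c2: "u \<star> y \<ominus> [(2 * k)] \<cdot> c \<in> M" using C2[OF l] y by simp
    have f3: "[(2 * m)] \<cdot> (u \<star> y) \<ominus> [(4 * (k * m))] \<cdot> c \<in> M"
      using md_pow[OF aM _ _ c2, of "2 * m"] yc uc cc pw by simp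
    have f12: "s \<star> y \<ominus> [(2 * m)] \<cdot> (u \<star> y) \<in> M"
      using md_trans[OF aM _ _ _ f1 f2] sc yc pc uc by simp
    have "s \<star> y \<ominus> [(4 * (k * m))] \<cdot> c \<in> M"
      using md_trans[OF aM _ _ _ f12 f3] sc yc uc cc by simp
    then have sy: "s \<star> y \<in> I" using memI yc sc by blast
    show "y \<star> s \<in> I \<and> s \<star> y \<in> I" using ys sy by simp
  qed
  have iI: "ideal_in A J I" by (rule ideal_inI[OF aI sbJ IJ cl])
  have iIA: "ideal_in A (carrier A) I" using T iI iJ by blast
  have u2I: "[(2::int)] \<cdot> u \<in> I"
  proof -
    have "[(2::int)] \<cdot> u = [(2 * (1::int))] \<cdot> u \<oplus> ([(4 * (0::int))] \<cdot> c \<oplus> \<zero>)" using uc by simp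
    then show ?thesis unfolding I_def using asub_zero[OF aM] by blast
  qed
  have u2Z: "[(2::int)] \<cdot> u \<in> Z" by (rule asub_pow[OF aZ uZ'])
  have u2c: "[(2::int)] \<cdot> u \<in> carrier A" using uc by simp
  have decomp: "\<And>e. e \<in> I \<Longrightarrow> \<exists>m j \<mu>. e = [(2 * (m::int))] \<cdot> u \<oplus> ([(4 * (j::int))] \<cdot> c \<oplus> \<mu>) \<and> \<mu> \<in> M"
    unfolding I_def by blast
  have tc: "finite_add_order A c"
  proof -
    have "u \<star> [(2::int)] \<cdot> u \<in> I" using idl_l[OF iIA uc u2I] .
    moreover have e: "u \<star> [(2::int)] \<cdot> u = [(2::int)] \<cdot> c" using uc by (simp add: st_pow_right c_def)
    ultimately obtain m j \<mu> where q: "[(2::int)] \<cdot> c = [(2 * (m::int))] \<cdot> u \<oplus> ([(4 * (j::int))] \<cdot> c \<oplus> \<mu>)" and mu: "\<mu> \<in> M"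
      using decomp by metis
    have muc: "\<mu> \<in> carrier A" using mu Mc by simp
    show ?thesis
    proof (cases "m = 0")
      case True
      then have q0: "[(2::int)] \<cdot> c = [(4 * j)] \<cdot> c \<oplus> \<mu>" using q cc muc by simp
      have "[(2 - 4 * j)] \<cdot> c = [(2::int)] \<cdot> c \<ominus> [(4 * j)] \<cdot> c"
        using cc by (simp add: add.int_pow_diff minus_eq)
      also have "... = \<mu>" unfolding q0 using add_minus_cancel cc muc by simp
      finally have "finite_add_order A ([(2 - 4 * j)] \<cdot> c)" using Mt[OF mu] by simp
      moreover have "(2 - 4 * j) \<noteq> 0" by presburger
      ultimately show ?thesis using tors_intpow_rev cc by blast
    next
      case False
      have "[(2 * m)] \<cdot> u = [(2::int)] \<cdot> c \<ominus> ([(4 * j)] \<cdot> c \<oplus> \<mu>)"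
        by (rule eq_sub[OF _ _ q]) (use uc cc muc in auto)
      then have "[(2 * m)] \<cdot> u \<in> L"
        using asub_minus[OF aL asub_pow[OF aL cL] asub_add[OF aL asub_pow[OF aL cL]]] mu hML by auto
      then have "u \<star> [(2 * m)] \<cdot> u \<in> M" using LM uc by blast
      then have "finite_add_order A ([(2 * m)] \<cdot> c)" using Mt uc by (simp add: st_pow_right c_def)
      moreover have "2 * m \<noteq> 0" using False by simp
      ultimately show ?thesis using tors_intpow_rev cc by blast
    qed
  qed
  have split: "\<And>e. e \<in> I \<Longrightarrow> e \<in> L \<Longrightarrow> finite_add_order A e \<or> (\<exists>m::int. m \<noteq> 0 \<and> [(2 * m)] \<cdot> u \<in> L)"
  proof -
    fix e assume eI: "e \<in> I" and eL: "e \<in> L"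
    obtain m j \<mu> where q: "e = [(2 * (m::int))] \<cdot> u \<oplus> ([(4 * (j::int))] \<cdot> c \<oplus> \<mu>)" and mu: "\<mu> \<in> M"
      using decomp[OF eI] by metis
    have muc: "\<mu> \<in> carrier A" using mu Mc by simp
    show "finite_add_order A e \<or> (\<exists>m::int. m \<noteq> 0 \<and> [(2 * m)] \<cdot> u \<in> L)"
    proof (cases "m = 0")
      case True
      then have "e = [(4 * j)] \<cdot> c \<oplus> \<mu>" using q cc muc by simp
      then have "finite_add_order A e" using tors_add[OF _ muc tors_intpow[OF cc tc] Mt[OF mu]] cc by simp
      then show ?thesis by simp
    next
      case False
      have "[(2 * m)] \<cdot> u = e \<ominus> ([(4 * j)] \<cdot> c \<oplus> \<mu>)"
        by (rule eq_sub[OF _ _ q]) (use uc cc muc in auto)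
      then have "[(2 * m)] \<cdot> u \<in> L"
        using asub_minus[OF aL eL asub_add[OF aL asub_pow[OF aL cL]]] mu hML by auto
      then show ?thesis using False by blast
    qed
  qed
  have B: "finite_add_order A (x \<star> u)"
  proof -
    have xuc: "x \<star> u \<in> carrier A" using x uc by simp
    have eI: "x \<star> [(2::int)] \<cdot> u \<in> I" using idl_l[OF iIA x u2I] .
    have eq: "x \<star> [(2::int)] \<cdot> u = [(2::int)] \<cdot> (x \<star> u)" using x uc by (simp add: st_pow_right)
    have eL: "x \<star> [(2::int)] \<cdot> u \<in> L" unfolding eq using asub_pow[OF aL] hu[OF x] by blast
    from split[OF eI eL] show ?thesis
    proof
      assume "finite_add_order A (x \<star> [(2::int)] \<cdot> u)"
      then show ?thesis using tors_intpow_rev[OF xuc, of 2] eq by simp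
    next
      assume "\<exists>m::int. m \<noteq> 0 \<and> [(2 * m)] \<cdot> u \<in> L"
      then obtain m :: int where m: "m \<noteq> 0" "[(2 * m)] \<cdot> u \<in> L" by blast
      have "x \<star> [(2 * m)] \<cdot> u \<in> M" using LM[OF m(2) x] by simp
      then have "finite_add_order A ([(2 * m)] \<cdot> (x \<star> u))" using Mt x uc by (simp add: st_pow_right)
      then show ?thesis using tors_intpow_rev[OF xuc, of "2 * m"] m by simp
    qed
  qed
  have C: "finite_add_order A (u \<star> x)"
  proof -
    have uxc: "u \<star> x \<in> carrier A" using x uc by simp
    have eI: "([(2::int)] \<cdot> u) \<star> x \<in> I" using idl_r[OF iIA x u2I] .
    have eL: "([(2::int)] \<cdot> u) \<star> x \<in> L" using Zmem[of _ L x] u2Z x Z_def by blast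
    have ec: "([(2::int)] \<cdot> u) \<star> x \<in> carrier A" using u2c x by simp
    have dd: "([(2::int)] \<cdot> u) \<star> x \<ominus> [(2::int)] \<cdot> (u \<star> x) \<in> M" by (rule LLpow[OF iL iM LM hML uc hu x])
    from split[OF eI eL] show ?thesis
    proof
      assume te: "finite_add_order A (([(2::int)] \<cdot> u) \<star> x)"
      have "finite_add_order A (([(2::int)] \<cdot> u) \<star> x \<ominus> (([(2::int)] \<cdot> u) \<star> x \<ominus> [(2::int)] \<cdot> (u \<star> x)))"
        using tors_minus[OF ec _ te Mt[OF dd]] ec uxc by simp
      then have "finite_add_order A ([(2::int)] \<cdot> (u \<star> x))" using minus_minus_cancel ec uxc by simp
      then show ?thesis using tors_intpow_rev[OF uxc, of 2] by simp
    next
      assume "\<exists>m::int. m \<noteq> 0 \<and> [(2 * m)] \<cdot> u \<in> L"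
      then obtain m :: int where m: "m \<noteq> 0" "[(2 * m)] \<cdot> u \<in> L" by blast
      have pc: "[(2 * m)] \<cdot> u \<in> carrier A" using uc by simp
      have P: "([(2 * m)] \<cdot> u) \<star> x \<in> M" using LM[OF m(2) x] by simp
      have d2: "([(2 * m)] \<cdot> u) \<star> x \<ominus> [(2 * m)] \<cdot> (u \<star> x) \<in> M" by (rule LLpow[OF iL iM LM hML uc hu x])
      have "finite_add_order A (([(2 * m)] \<cdot> u) \<star> x \<ominus> (([(2 * m)] \<cdot> u) \<star> x \<ominus> [(2 * m)] \<cdot> (u \<star> x)))"
        using tors_minus[OF _ _ Mt[OF P] Mt[OF d2]] pc x uxc by simp
      then have "finite_add_order A ([(2 * m)] \<cdot> (u \<star> x))" using minus_minus_cancel pc x uxc by simp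
      then show ?thesis using tors_intpow_rev[OF uxc, of "2 * m"] m by simp
    qed
  qed
  show ?thesis using B C by simp
qed
end



context brc begin

lemma terms_prop:
  assumes T: "\<forall>I J. ideal_in A J I \<and> ideal_in A (carrier A) J \<longrightarrow> ideal_in A (carrier A) I"
    and Zt: "Z \<in> upper_star_terms A"
  shows "ideal_in A (carrier A) Z \<and>
    (\<forall>l\<in>Z. \<forall>x\<in>carrier A. finite_add_order A (l \<star> x) \<and> finite_add_order A (x \<star> l))"
  using Zt
proof (induction rule: upper_star_terms.induct)
  case zero
  show ?case using zero_ideal tors_zero by simp
next
  case (succ L)
  have iL: "ideal_in A (carrier A) L" using succ.IH by simp
  have tL: "\<And>l x. l \<in> L \<Longrightarrow> x \<in> carrier A \<Longrightarrow> finite_add_order A (l \<star> x) \<and> finite_add_order A (x \<star> l)"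
    using succ.IH by simp
  show ?case using center_ideal[OF iL] succ_tors[OF T iL tL] by blast
next
  case (limit C)
  have "ideal_in A (carrier A) (\<Union>C)" using chain_ideal[OF limit.hyps(2) limit.hyps(3)] limit.IH by blast
  moreover have "\<forall>l\<in>\<Union>C. \<forall>x\<in>carrier A. finite_add_order A (l \<star> x) \<and> finite_add_order A (x \<star> l)"
    using limit.IH by blast
  ultimately show ?case by simp
qed

lemma gen_tors:
  assumes h: "\<And>a b. a \<in> carrier A \<Longrightarrow> b \<in> carrier A \<Longrightarrow> finite_add_order A (a \<star> b)"
    and g: "g \<in> generate (add_monoid A) {a \<star> b | a b. a \<in> carrier A \<and> b \<in> carrier A}"
  shows "g \<in> carrier A \<and> finite_add_order A g"
  using g
proof (induction rule: generate.induct)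
  case one
  then show ?case using tors_zero by simp
next
  case (incl x)
  then show ?case using h by auto
next
  case (inv x)
  then obtain a b where "x = a \<star> b" "a \<in> carrier A" "b \<in> carrier A" by auto
  then show ?case using h tors_neg by (simp add: a_inv_def[symmetric])
next
  case (eng x y)
  then show ?case using tors_add by simp
qed

end

theorem lemma4p1:
  fixes A :: "('a, 'b) ring_scheme"
  assumes "T_brace A"
  shows "(star_hypercentral A \<longrightarrow> (\<forall>g\<in>star_square A. finite_add_order A g))
       \<and> (\<forall>Z\<in>upper_star_terms A. \<forall>a\<in>Z. \<forall>b\<in>Z. finite_add_order A (bstar A a b))"
proof -
  have b: "brace A" and T: "\<forall>I J. ideal_in A J I \<and> ideal_in A (carrier A) J \<longrightarrow> ideal_in A (carrier A) I"
    using assms unfolding T_brace_def by auto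
  have B: "brc A" using b unfolding brace_def brc_def brc_axioms_def by auto
  have P: "\<And>Z. Z \<in> upper_star_terms A \<Longrightarrow> ideal_in A (carrier A) Z \<and>
    (\<forall>l\<in>Z. \<forall>x\<in>carrier A. finite_add_order A (bstar A l x) \<and> finite_add_order A (bstar A x l))"
    using brc.terms_prop[OF B T] by blast
  have ii: "\<forall>Z\<in>upper_star_terms A. \<forall>a\<in>Z. \<forall>b\<in>Z. finite_add_order A (bstar A a b)"
  proof (intro ballI)
    fix Z a b assume Z: "Z \<in> upper_star_terms A" and a: "a \<in> Z" and bb: "b \<in> Z"
    have "b \<in> carrier A" using brc.idl_carr[OF B _ bb] P[OF Z] by blast
    then show "finite_add_order A (bstar A a b)" using P[OF Z] a by blast
  qed
  have i: "star_hypercentral A \<longrightarrow> (\<forall>g\<in>star_square A. finite_add_order A g)"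
  proof (intro impI ballI)
    assume "star_hypercentral A"
    then have Ct: "carrier A \<in> upper_star_terms A" by (simp add: star_hypercentral_def)
    have h: "\<And>a b. a \<in> carrier A \<Longrightarrow> b \<in> carrier A \<Longrightarrow> finite_add_order A (bstar A a b)"
      using P[OF Ct] by blast
    fix g assume "g \<in> star_square A"
    then show "finite_add_order A g"
      using brc.gen_tors[OF B h] unfolding star_square_def by blast
  qed
  show ?thesis using i ii by simp
qed


end
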